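(* Let $G$ be a graph with a linear order $<$ on $V(G)$ satisfying the X-property, and let $s<t$ be vertices with $\operatorname{dist}(s,t)<\infty$. If a shortest $s$-$t$ path $P$ contains two edges $\{v,v'\}$ and $\{w,w'\}$ with $v<w<v'<w'$, then $P$ also contains the edge $\{v,w'\}$; moreover, this is the only pair of crossing edges in $P$, and every vertex $x$ of $P$ satisfies $v\le x\le w'$.
   Context: The X-property: for all vertices $p<q<r<s$, if $\{p,r\}\in E(G)$ and $\{q,s\}\in E(G)$ then $\{p,s\}\in E(G)$. $\operatorname{dist}(s,t)$ is the number of edges of a shortest $s$-$t$ path. Two edges $\{a,b\}$ and $\{c,d\}$ with $a<b$, $c<d$ are crossing if $a<c<b<d$ or $c<a<d<b$. *)

theory Defs
  imports Main
begin

definition simple_graph :: "'a set \<Rightarrow> 'a set set \<Rightarrow> bool" where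
  "simple_graph V E \<longleftrightarrow> (\<forall>e\<in>E. \<exists>a b. a \<noteq> b \<and> a \<in> V \<and> b \<in> V \<and> e = {a, b})"

definition X_property :: "'a::linorder set \<Rightarrow> 'a set set \<Rightarrow> bool" where
  "X_property V E \<longleftrightarrow> (\<forall>p\<in>V. \<forall>q\<in>V. \<forall>r\<in>V. \<forall>s\<in>V.
     p < q \<and> q < r \<and> r < s \<and> {p, r} \<in> E \<and> {q, s} \<in> E \<longrightarrow> {p, s} \<in> E)"

definition walk :: "'a set \<Rightarrow> 'a set set \<Rightarrow> 'a list \<Rightarrow> bool" where
  "walk V E P \<longleftrightarrow> P \<noteq> [] \<and> set P \<subseteq> V \<and> (\<forall>i. Suc i < length P \<longrightarrow> {P ! i, P ! Suc i} \<in> E)"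

definition path :: "'a set \<Rightarrow> 'a set set \<Rightarrow> 'a list \<Rightarrow> bool" where
  "path V E P \<longleftrightarrow> walk V E P \<and> distinct P"

definition st_path :: "'a set \<Rightarrow> 'a set set \<Rightarrow> 'a \<Rightarrow> 'a \<Rightarrow> 'a list \<Rightarrow> bool" where
  "st_path V E s t P \<longleftrightarrow> path V E P \<and> hd P = s \<and> last P = t"

definition path_len :: "'a list \<Rightarrow> nat" where
  "path_len P = length P - 1"

text \<open>dist(s,t) < infinity: some s-t path exists.\<close>
definition connected_to :: "'a set \<Rightarrow> 'a set set \<Rightarrow> 'a \<Rightarrow> 'a \<Rightarrow> bool" where
  "connected_to V E s t \<longleftrightarrow> (\<exists>P. st_path V E s t P)"

text \<open>dist(s,t) (meaningful when connected_to holds).\<close>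
definition dist :: "'a set \<Rightarrow> 'a set set \<Rightarrow> 'a \<Rightarrow> 'a \<Rightarrow> nat" where
  "dist V E s t = (LEAST n. \<exists>P. st_path V E s t P \<and> path_len P = n)"

definition shortest_path :: "'a set \<Rightarrow> 'a set set \<Rightarrow> 'a \<Rightarrow> 'a \<Rightarrow> 'a list \<Rightarrow> bool" where
  "shortest_path V E s t P \<longleftrightarrow> st_path V E s t P \<and> path_len P = dist V E s t"

definition path_edges :: "'a list \<Rightarrow> 'a set set" where
  "path_edges P = {{P ! i, P ! Suc i} | i. Suc i < length P}"

definition crossing :: "'a::linorder set \<Rightarrow> 'a set \<Rightarrow> bool" where
  "crossing e f \<longleftrightarrow> (\<exists>a b c d. e = {a, b} \<and> f = {c, d} \<and> a < b \<and> c < d \<and>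
      ((a < c \<and> c < b \<and> b < d) \<or> (c < a \<and> a < d \<and> d < b)))"

end

theory Submission
  imports Defs
begin

lemma sp_basic:
  assumes "shortest_path V E s t P"
  shows "distinct P" "set P \<subseteq> V" "P \<noteq> []"
    "\<And>i. Suc i < length P \<Longrightarrow> {P ! i, P ! Suc i} \<in> E"
  using assms unfolding shortest_path_def st_path_def path_def walk_def by auto

lemma shortcut:
  assumes sp: "shortest_path V E s t P" and ij: "i < j" and jn: "j < length P"
    and e: "{P ! i, P ! j} \<in> E"
  shows "j = Suc i"
proof (rule ccontr)
  assume "j \<noteq> Suc i"
  with ij have ij2: "Suc i < j" by simp
  have dP: "distinct P" and VP: "set P \<subseteq> V" and eP: "\<And>i. Suc i < length P \<Longrightarrow> {P ! i, P ! Suc i} \<in> E"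
    using sp_basic[OF sp] by auto
  have hdP: "hd P = s" and lastP: "last P = t" and lenP: "path_len P = dist V E s t"
    using sp unfolding shortest_path_def st_path_def by auto
  define Q where "Q = take (Suc i) P @ drop j P"
  have lenQ: "length Q = Suc i + (length P - j)" using ij jn unfolding Q_def by simp
  have Qlo: "Q ! k = P ! k" if "k \<le> i" for k
    using that ij jn unfolding Q_def by (simp add: nth_append)
  have Qhi: "Q ! k = P ! (j + (k - Suc i))" if "k > i" "k < length Q" for k
    using that ij jn lenQ unfolding Q_def by (simp add: nth_append)
  have walkQ: "walk V E Q"
    unfolding walk_def
  proof (intro conjI allI impI)
    show "Q \<noteq> []" using lenQ by auto
    have "set Q \<subseteq> set P" unfolding Q_def
      using set_take_subset[of "Suc i" P] set_drop_subset[of j P] by auto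
    then show "set Q \<subseteq> V" using VP by blast
    fix k assume k: "Suc k < length Q"
    consider "k < i" | "k = i" | "k > i" by linarith
    then show "{Q ! k, Q ! Suc k} \<in> E"
    proof cases
      case 1
      then show ?thesis using Qlo[of k] Qlo[of "Suc k"] eP[of k] ij jn by simp
    next
      case 2
      then show ?thesis using Qlo[of k] Qhi[of "Suc k"] k e by simp
    next
      case 3
      have a: "Q ! k = P ! (j + (k - Suc i))" using Qhi[of k] 3 k by simp
      have e1: "j + (Suc k - Suc i) = Suc (j + (k - Suc i))" using 3 by linarith
      have b: "Q ! Suc k = P ! Suc (j + (k - Suc i))" using Qhi[of "Suc k"] 3 k
        unfolding e1 by simp
      have c: "Suc (j + (k - Suc i)) < length P" using k lenQ 3 ij jn by linarith
      show ?thesis using a b eP[OF c] by simp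
    qed
  qed
  have dQ: "distinct Q" unfolding Q_def using dP ij
    by (simp add: set_take_disj_set_drop_if_distinct)
  have "hd Q = s" unfolding Q_def using hdP jn by (cases P) auto
  moreover have "last Q = t" unfolding Q_def using lastP jn by simp
  ultimately have "st_path V E s t Q" using walkQ dQ unfolding st_path_def path_def by simp
  then have "dist V E s t \<le> path_len Q" unfolding dist_def
    using Least_le[of "\<lambda>n. \<exists>P. st_path V E s t P \<and> path_len P = n" "path_len Q"] by blast
  moreover have "path_len Q < path_len P" unfolding path_len_def using lenQ ij2 jn by simp
  ultimately show False using lenP by simp
qed

lemma shortcut2:
  assumes sp: "shortest_path V E s t P" and "i \<noteq> j" "i < length P" "j < length P"
    and e: "{P ! i, P ! j} \<in> E"
  shows "j = Suc i \<or> i = Suc j"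
proof (cases "i < j")
  case True then show ?thesis using shortcut[OF sp True] assms by simp
next
  case False
  then have "j < i" using assms by simp
  note ji = this
  show ?thesis using shortcut[OF sp ji] assms by (simp add: insert_commute)
qed

lemma Xuse:
  assumes "X_property V E" "p \<in> V" "q \<in> V" "r \<in> V" "u \<in> V"
    "p < q" "q < r" "r < u" "{p, r} \<in> E" "{q, u} \<in> E"
  shows "{p, u} \<in> E"
  using assms unfolding X_property_def by blast

lemma step:
  assumes sp: "shortest_path V E s t P" and X: "X_property V E"
    and lh: "lo < hi" and a: "Suc a < length P" and ea: "{P ! a, P ! Suc a} = {lo, hi}"
    and k: "k < length P" and k': "k' < length P" and ek: "{P ! k, P ! k'} \<in> E"
    and in1: "lo < P ! k" and in2: "P ! k < hi"
    and far: "Suc (Suc k') \<le> a \<or> a + 3 \<le> k'"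
  shows "lo < P ! k' \<and> P ! k' < hi"
proof -
  have dP: "distinct P" and VP: "set P \<subseteq> V" and eP: "\<And>i. Suc i < length P \<Longrightarrow> {P ! i, P ! Suc i} \<in> E"
    using sp_basic[OF sp] by auto
  have inV: "P ! m \<in> V" if "m < length P" for m using VP that by auto
  obtain ilo ihi where ii: "(ilo = a \<and> ihi = Suc a) \<or> (ilo = Suc a \<and> ihi = a)"
    and plo: "P ! ilo = lo" and phi: "P ! ihi = hi"
    using ea lh by (auto simp: doubleton_eq_iff)
  have elh: "{lo, hi} \<in> E" using eP[OF a] ea by simp
  have ilo: "ilo < length P" and ihi: "ihi < length P" using ii a by auto
  have ne1: "P ! k' \<noteq> lo"
  proof
    assume "P ! k' = lo"
    then have "k' = ilo" using plo dP k' ilo nth_eq_iff_index_eq by metis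
    then show False using far ii by auto
  qed
  have ne2: "P ! k' \<noteq> hi"
  proof
    assume "P ! k' = hi"
    then have "k' = ihi" using phi dP k' ihi nth_eq_iff_index_eq by metis
    then show False using far ii by auto
  qed
  have c1: "\<not> P ! k' < lo"
  proof
    assume lt: "P ! k' < lo"
    have "{P ! k', hi} \<in> E"
      using Xuse[OF X inV[OF k'] _ inV[OF k] _ lt in1 in2] ek elh plo phi ilo ihi inV
      by (metis insert_commute)
    then have "{P ! k', P ! ihi} \<in> E" using phi by simp
    moreover have "k' \<noteq> ihi" using far ii by auto
    ultimately have "ihi = Suc k' \<or> k' = Suc ihi" using shortcut2[OF sp _ k' ihi] by blast
    then show False using far ii by auto
  qed
  have c2: "\<not> P ! k' > hi"
  proof
    assume gt: "P ! k' > hi"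
    have "{lo, P ! k'} \<in> E"
      using Xuse[OF X _ inV[OF k] _ inV[OF k'] in1 in2 gt] ek elh plo phi ilo ihi inV
      by metis
    then have "{P ! ilo, P ! k'} \<in> E" using plo by simp
    moreover have "ilo \<noteq> k'" using far ii by auto
    ultimately have "k' = Suc ilo \<or> ilo = Suc k'" using shortcut2[OF sp _ ilo k'] by blast
    then show False using far ii by auto
  qed
  show ?thesis using c1 c2 ne1 ne2 by auto
qed


lemma bounds:
  assumes sp: "shortest_path V E s t P" and X: "X_property V E"
    and lh: "lo < hi" and a0: "0 < a" and a: "Suc (Suc a) < length P" and ea: "{P ! a, P ! Suc a} = {lo, hi}"
    and m1: "lo < P ! (a - 1)" "P ! (a - 1) < hi"
    and m2: "lo < P ! Suc (Suc a)" "P ! Suc (Suc a) < hi"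
  shows "\<forall>k<length P. lo \<le> P ! k \<and> P ! k \<le> hi"
proof -
  have eP: "\<And>i. Suc i < length P \<Longrightarrow> {P ! i, P ! Suc i} \<in> E"
    using sp_basic[OF sp] by auto
  have a1: "Suc a < length P" using a by simp
  have up: "\<forall>m. Suc (Suc a) + m < length P \<longrightarrow> lo < P ! (Suc (Suc a) + m) \<and> P ! (Suc (Suc a) + m) < hi"
  proof
    fix m show "Suc (Suc a) + m < length P \<longrightarrow> lo < P ! (Suc (Suc a) + m) \<and> P ! (Suc (Suc a) + m) < hi"
    proof (induction m)
      case 0 then show ?case using m2 by simp
    next
      case (Suc m)
      show ?case
      proof
        assume l: "Suc (Suc a) + Suc m < length P"
        then have IH: "lo < P ! (Suc (Suc a) + m) \<and> P ! (Suc (Suc a) + m) < hi" using Suc by simp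
        have e: "{P ! (Suc (Suc a) + m), P ! Suc (Suc (Suc a) + m)} \<in> E" using eP l by simp
        have "lo < P ! Suc (Suc (Suc a) + m) \<and> P ! Suc (Suc (Suc a) + m) < hi"
          by (rule step[OF sp X lh a1 ea _ _ e]) (use IH l in auto)
        then show "lo < P ! (Suc (Suc a) + Suc m) \<and> P ! (Suc (Suc a) + Suc m) < hi" by simp
      qed
    qed
  qed
  have down: "\<forall>m. m \<le> a - 1 \<longrightarrow> lo < P ! (a - 1 - m) \<and> P ! (a - 1 - m) < hi"
  proof
    fix m show "m \<le> a - 1 \<longrightarrow> lo < P ! (a - 1 - m) \<and> P ! (a - 1 - m) < hi"
    proof (induction m)
      case 0 then show ?case using m1 by simp
    next
      case (Suc m)
      show ?case
      proof
        assume l: "Suc m \<le> a - 1"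
        then have IH: "lo < P ! (a - 1 - m) \<and> P ! (a - 1 - m) < hi" using Suc by simp
        have sk: "Suc (a - 1 - Suc m) = a - 1 - m" using l by simp
        have "{P ! (a - 1 - Suc m), P ! Suc (a - 1 - Suc m)} \<in> E" using eP a l by simp
        then have e: "{P ! (a - 1 - m), P ! (a - 1 - Suc m)} \<in> E" unfolding sk by (simp add: insert_commute)
        show "lo < P ! (a - 1 - Suc m) \<and> P ! (a - 1 - Suc m) < hi"
          by (rule step[OF sp X lh a1 ea _ _ e]) (use IH l a in auto)
      qed
    qed
  qed
  show ?thesis
  proof (intro allI impI)
    fix k assume k: "k < length P"
    consider "k \<le> a - 1" | "k = a" | "k = Suc a" | "Suc (Suc a) \<le> k" by linarith
    then show "lo \<le> P ! k \<and> P ! k \<le> hi"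
    proof cases
      case 1
      have ee: "a - 1 - (a - 1 - k) = k" using 1 by simp
      show ?thesis using down[rule_format, of "a - 1 - k"] 1 a0 unfolding ee by force
    next
      case 2
      then show ?thesis using ea lh by (auto simp: doubleton_eq_iff)
    next
      case 3
      then show ?thesis using ea lh by (auto simp: doubleton_eq_iff)
    next
      case 4
      have ee: "Suc (Suc a) + (k - Suc (Suc a)) = k" using 4 by simp
      show ?thesis using up[rule_format, of "k - Suc (Suc a)"] k unfolding ee by force
    qed
  qed
qed


lemma struct:
  assumes sp: "shortest_path V E s t P" and X: "X_property V E"
    and i: "Suc i < length P" and ei: "{P ! i, P ! Suc i} = {p, r}"
    and j: "Suc j < length P" and ej: "{P ! j, P ! Suc j} = {q, u}"
    and o: "p < q" "q < r" "r < u"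
  shows "\<exists>a. 0 < a \<and> Suc (Suc a) < length P \<and> {P ! a, P ! Suc a} = {p, u}
     \<and> P ! (a - 1) \<in> {q, r} \<and> P ! Suc (Suc a) \<in> {q, r}"
proof -
  have dP: "distinct P" and VP: "set P \<subseteq> V" and eP: "\<And>i. Suc i < length P \<Longrightarrow> {P ! i, P ! Suc i} \<in> E"
    using sp_basic[OF sp] by auto
  have inV: "P ! m \<in> V" if "m < length P" for m using VP that by auto
  obtain ip ir where iip: "(ip = i \<and> ir = Suc i) \<or> (ip = Suc i \<and> ir = i)"
    and pp: "P ! ip = p" and pr: "P ! ir = r"
    using ei o by (auto simp: doubleton_eq_iff)
  obtain iq iu where iiq: "(iq = j \<and> iu = Suc j) \<or> (iq = Suc j \<and> iu = j)"
    and pq: "P ! iq = q" and pu: "P ! iu = u"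
    using ej o by (auto simp: doubleton_eq_iff)
  have lens: "ip < length P" "ir < length P" "iq < length P" "iu < length P" using iip iiq i j by auto
  have epr: "{p, r} \<in> E" using eP[OF i] ei by simp
  have equ: "{q, u} \<in> E" using eP[OF j] ej by simp
  have "{p, u} \<in> E" using Xuse[OF X _ _ _ _ o epr equ] pp pr pq pu lens inV by metis
  then have epu: "{P ! ip, P ! iu} \<in> E" using pp pu by simp
  have neq: "ip \<noteq> iu" "ir \<noteq> iu" "iq \<noteq> ip" using pp pr pq pu o by auto
  have adj: "iu = Suc ip \<or> ip = Suc iu" using shortcut2[OF sp neq(1) lens(1) lens(4) epu] .
  have adj1: "ir = Suc ip \<or> ip = Suc ir" and adj2: "iu = Suc iq \<or> iq = Suc iu" using iip iiq by auto
  show ?thesis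
  proof (cases "iu = Suc ip")
    case True
    then have "ip = Suc ir" "iq = Suc iu" using adj1 adj2 neq by auto
    then show ?thesis using True pp pr pq pu lens
      by (intro exI[of _ ip]) auto
  next
    case False
    then have "ip = Suc iu" using adj by simp
    then have "ir = Suc ip" "iu = Suc iq" using adj1 adj2 neq by auto
    then show ?thesis using \<open>ip = Suc iu\<close> pp pr pq pu lens
      by (intro exI[of _ iu]) (auto simp: insert_commute)
  qed
qed


lemma pair_idx:
  assumes "distinct P" "Suc a < length P" "Suc b < length P" "{P ! a, P ! Suc a} = {P ! b, P ! Suc b}"
  shows "a = b"
proof -
  have "P ! a \<in> {P ! b, P ! Suc b}" "P ! b \<in> {P ! a, P ! Suc a}" using assms(4) by auto
  then have "(a = b \<or> a = Suc b) \<and> (b = a \<or> b = Suc a)"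
    using assms(1-3) nth_eq_iff_index_eq by (metis Suc_lessD insertE singletonD)
  then show ?thesis by auto
qed

lemma two_sets:
  fixes x :: "'a::linorder"
  assumes "x \<noteq> y" "{x, y} \<subseteq> {q, r}" "{x, y} \<subseteq> {w, v}" "q < r" "w < v"
  shows "q = w \<and> r = v"
proof -
  have "{x, y} = {q, r}" "{x, y} = {w, v}" using assms by auto
  then have "{q, r} = {w, v}" by simp
  then show ?thesis using assms(4,5) by (auto simp: doubleton_eq_iff)
qed

lemma uniq:
  assumes sp: "shortest_path V E s t P" and X: "X_property V E"
    and B: "\<forall>k<length P. v \<le> P ! k \<and> P ! k \<le> w'"
    and a0: "0 < a" and a: "Suc (Suc a) < length P" and ea: "{P ! a, P ! Suc a} = {v, w'}"
    and am: "P ! (a - 1) \<in> {w, v'}" "P ! Suc (Suc a) \<in> {w, v'}"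
    and o0: "w < v'"
    and i: "Suc i < length P" and ei: "{P ! i, P ! Suc i} = {p, r}"
    and j: "Suc j < length P" and ej: "{P ! j, P ! Suc j} = {q, u}"
    and o: "p < q" "q < r" "r < u"
  shows "{p, r} = {v, v'} \<and> {q, u} = {w, w'}"
proof -
  have dP: "distinct P" using sp_basic[OF sp] by auto
  obtain a2 where a20: "0 < a2" and a2: "Suc (Suc a2) < length P" and ea2: "{P ! a2, P ! Suc a2} = {p, u}"
    and am2: "P ! (a2 - 1) \<in> {q, r}" "P ! Suc (Suc a2) \<in> {q, r}"
    using struct[OF sp X i ei j ej o] by blast
  have B2: "\<forall>k<length P. p \<le> P ! k \<and> P ! k \<le> u"
    by (rule bounds[OF sp X _ a20 a2 ea2]) (use am2 o in auto)
  have la: "a < length P" "Suc a < length P" "a2 < length P" "Suc a2 < length P" using a a2 by auto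
  have "(P ! a = v \<and> P ! Suc a = w') \<or> (P ! a = w' \<and> P ! Suc a = v)" using ea by (simp add: doubleton_eq_iff)
  then obtain kv kw where kv: "kv < length P" "P ! kv = v" and kw: "kw < length P" "P ! kw = w'"
    using la by blast
  have "(P ! a2 = p \<and> P ! Suc a2 = u) \<or> (P ! a2 = u \<and> P ! Suc a2 = p)" using ea2 by (simp add: doubleton_eq_iff)
  then obtain kp ku where kp: "kp < length P" "P ! kp = p" and ku: "ku < length P" "P ! ku = u"
    using la by blast
  have "v \<le> p" "p \<le> v" using B[rule_format, OF kp(1)] B2[rule_format, OF kv(1)] kp kv by auto
  then have "p = v" by simp
  have "u \<le> w'" "w' \<le> u" using B[rule_format, OF ku(1)] B2[rule_format, OF kw(1)] ku kw by auto
  then have "u = w'" by simp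
  note pv = \<open>p = v\<close>
  have "a2 = a" using pair_idx[OF dP la(4) la(2)] ea ea2 pv \<open>u = w'\<close> by simp
  have ne: "P ! (a - 1) \<noteq> P ! Suc (Suc a)"
    using a nth_eq_iff_index_eq[OF dP, of "a - 1" "Suc (Suc a)"] by simp
  have s1: "{P ! (a - 1), P ! Suc (Suc a)} \<subseteq> {q, r}" using am2 \<open>a2 = a\<close> by simp
  have s2: "{P ! (a - 1), P ! Suc (Suc a)} \<subseteq> {w, v'}" using am by simp
  have "q = w \<and> r = v'" using two_sets[OF ne s1 s2 o(2) o0] .
  then show ?thesis using \<open>p = v\<close> \<open>u = w'\<close> by simp
qed

lemma path_edgesE: "e \<in> path_edges P \<Longrightarrow> \<exists>i. Suc i < length P \<and> {P ! i, P ! Suc i} = e"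
  unfolding path_edges_def by blast

lemma path_edgesI: "Suc i < length P \<Longrightarrow> {P ! i, P ! Suc i} \<in> path_edges P"
  unfolding path_edges_def by blast

theorem lemma6:
  fixes V :: "'a::linorder set" and E :: "'a set set" and s t v v' w w' :: 'a and P :: "'a list"
  assumes "simple_graph V E"
    and "X_property V E"
    and "s \<in> V" and "t \<in> V" and "s < t"
    and "connected_to V E s t"
    and "shortest_path V E s t P"
    and "{v, v'} \<in> path_edges P" and "{w, w'} \<in> path_edges P"
    and "v < w" and "w < v'" and "v' < w'"
  shows "{v, w'} \<in> path_edges P
    \<and> (\<forall>e\<in>path_edges P. \<forall>f\<in>path_edges P. crossing e f \<longrightarrow> {e, f} = {{v, v'}, {w, w'}})
    \<and> (\<forall>x\<in>set P. v \<le> x \<and> x \<le> w')"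
proof -
  note sp = assms(7) and X = assms(2)
  obtain i where i: "Suc i < length P" and ei: "{P ! i, P ! Suc i} = {v, v'}"
    using path_edgesE[OF assms(8)] by metis
  obtain j where j: "Suc j < length P" and ej: "{P ! j, P ! Suc j} = {w, w'}"
    using path_edgesE[OF assms(9)] by metis
  obtain a where a0: "0 < a" and a: "Suc (Suc a) < length P" and ea: "{P ! a, P ! Suc a} = {v, w'}"
    and am: "P ! (a - 1) \<in> {w, v'}" "P ! Suc (Suc a) \<in> {w, v'}"
    using struct[OF sp X i ei j ej assms(10-12)] by blast
  have B: "\<forall>k<length P. v \<le> P ! k \<and> P ! k \<le> w'"
    by (rule bounds[OF sp X _ a0 a ea]) (use am assms(10-12) in auto)
  have c1: "{v, w'} \<in> path_edges P" using path_edgesI[of a P] a ea by simp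
  have c3: "\<forall>x\<in>set P. v \<le> x \<and> x \<le> w'" using B by (auto simp: in_set_conv_nth)
  have c2: "crossing e f \<longrightarrow> {e, f} = {{v, v'}, {w, w'}}"
    if e: "e \<in> path_edges P" and f: "f \<in> path_edges P" for e f
  proof
    assume "crossing e f"
    then obtain a1 b1 c1 d1 where ee: "e = {a1, b1}" and ff: "f = {c1, d1}" and "a1 < b1" "c1 < d1"
      and cs: "(a1 < c1 \<and> c1 < b1 \<and> b1 < d1) \<or> (c1 < a1 \<and> a1 < d1 \<and> d1 < b1)"
      unfolding crossing_def by blast
    obtain ie where ie: "Suc ie < length P" and eie: "{P ! ie, P ! Suc ie} = e"
      using path_edgesE[OF e] by blast
    obtain jf where jf: "Suc jf < length P" and ejf: "{P ! jf, P ! Suc jf} = f"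
      using path_edgesE[OF f] by blast
    from cs show "{e, f} = {{v, v'}, {w, w'}}"
    proof
      assume o: "a1 < c1 \<and> c1 < b1 \<and> b1 < d1"
      have e1: "{P ! ie, P ! Suc ie} = {a1, b1}" using eie ee by simp
      have f1: "{P ! jf, P ! Suc jf} = {c1, d1}" using ejf ff by simp
      have "{a1, b1} = {v, v'} \<and> {c1, d1} = {w, w'}"
        using uniq[OF sp X B a0 a ea am assms(11) ie e1 jf f1] o by blast
      then show ?thesis using ee ff by simp
    next
      assume o: "c1 < a1 \<and> a1 < d1 \<and> d1 < b1"
      have e1: "{P ! ie, P ! Suc ie} = {a1, b1}" using eie ee by simp
      have f1: "{P ! jf, P ! Suc jf} = {c1, d1}" using ejf ff by simp
      have "{c1, d1} = {v, v'} \<and> {a1, b1} = {w, w'}"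
        using uniq[OF sp X B a0 a ea am assms(11) jf f1 ie e1] o by blast
      then have "f = {v, v'}" "e = {w, w'}" using ee ff by simp_all
      then show ?thesis by (simp add: insert_commute)
    qed
  qed
  show ?thesis
  proof (intro conjI ballI)
    show "{v, w'} \<in> path_edges P" by (rule c1)
  next
    fix e f assume "e \<in> path_edges P" "f \<in> path_edges P"
    then show "crossing e f \<longrightarrow> {e, f} = {{v, v'}, {w, w'}}" by (rule c2)
  next
    fix x assume "x \<in> set P"
    then show "v \<le> x" "x \<le> w'" using c3 by auto
  qed
qed

end
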